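(* Let $p,q\in\mathbb{N}$ be coprime, $k\in\mathbb{N}$ squarefree, $m=-pk$, $n=qk$, and let $T$ be the torsion subgroup of $E(m,n)(\mathbb{Q})$, where $E(m,n)$ is the elliptic curve $y^2=x(x+m)(x+n)$. (i) If $T\cong\mathbb{Z}/2\times\mathbb{Z}/4$ or $T\cong\mathbb{Z}/2\times\mathbb{Z}/8$, then $k=1$. (ii) If $T\cong\mathbb{Z}/2\times\mathbb{Z}/6$, then $k=1$ or $k=3$.
   Context: $E(m,n)$ is the elliptic curve $y^2=x(x+m)(x+n)$ over $\mathbb{Q}$ with neutral element the point at infinity. *)

theory Defs
  imports "HOL-Algebra.Algebra" "HOL-Computational_Algebra.Squarefree"
begin

text \<open>Rational points of E(m,n): y^2 = x(x+m)(x+n) = x^3 + (m+n) x^2 + m n x.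
  Points are represented as (rat \<times> rat) option, None being the point at infinity.\<close>

definition on_curve :: "int \<Rightarrow> int \<Rightarrow> rat \<times> rat \<Rightarrow> bool" where
  "on_curve m n P = (case P of (x, y) \<Rightarrow>
      y^2 = x * (x + of_int m) * (x + of_int n))"

definition ec_add :: "int \<Rightarrow> int \<Rightarrow> (rat \<times> rat) option \<Rightarrow> (rat \<times> rat) option \<Rightarrow> (rat \<times> rat) option" where
  "ec_add m n P Q = (case P of None \<Rightarrow> Q | Some (x1, y1) \<Rightarrow>
     (case Q of None \<Rightarrow> P | Some (x2, y2) \<Rightarrow>
       (if x1 = x2 \<and> y1 = - y2 then None
        else
          (let a2 = of_int (m + n); a4 = of_int (m * n);
               l = (if x1 = x2 then (3 * x1^2 + 2 * a2 * x1 + a4) / (2 * y1)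
                    else (y2 - y1) / (x2 - x1));
               x3 = l^2 - a2 - x1 - x2;
               y3 = l * (x1 - x3) - y1
           in Some (x3, y3)))))"

definition E_group :: "int \<Rightarrow> int \<Rightarrow> (rat \<times> rat) option monoid" where
  "E_group m n = \<lparr> carrier = insert None (Some ` {P. on_curve m n P}),
                   monoid.mult = ec_add m n, one = None \<rparr>"

definition torsion_points :: "int \<Rightarrow> int \<Rightarrow> (rat \<times> rat) option set" where
  "torsion_points m n = {P \<in> carrier (E_group m n).
      \<exists>k::nat. k > 0 \<and> P [^]\<^bsub>E_group m n\<^esub> k = \<one>\<^bsub>E_group m n\<^esub>}"

definition E_torsion :: "int \<Rightarrow> int \<Rightarrow> (rat \<times> rat) option monoid" where
  "E_torsion m n = (E_group m n)\<lparr>carrier := torsion_points m n\<rparr>"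

end

theory Submission imports Defs begin

definition gadd :: "rat \<Rightarrow> rat \<Rightarrow> (rat \<times> rat) option \<Rightarrow> (rat \<times> rat) option \<Rightarrow> (rat \<times> rat) option" where
  "gadd a2 a4 P Q = (case P of None \<Rightarrow> Q | Some (x1, y1) \<Rightarrow>
     (case Q of None \<Rightarrow> P | Some (x2, y2) \<Rightarrow>
       (if x1 = x2 \<and> y1 = - y2 then None
        else
          (let l = (if x1 = x2 then (3 * x1^2 + 2 * a2 * x1 + a4) / (2 * y1)
                    else (y2 - y1) / (x2 - x1));
               x3 = l^2 - a2 - x1 - x2;
               y3 = l * (x1 - x3) - y1
           in Some (x3, y3)))))"

lemma ec_add_gadd: "ec_add m n = gadd (of_int (m+n)) (of_int (m*n))"
  unfolding ec_add_def gadd_def Let_def by (intro ext) simp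

lemma gadd_None1[simp]: "gadd a b None Q = Q" by (simp add: gadd_def)
lemma gadd_None2[simp]: "gadd a b P None = P" by (cases P) (auto simp: gadd_def)

lemma gadd_opp: "x1 = x2 \<Longrightarrow> y1 = - y2 \<Longrightarrow> gadd a b (Some (x1,y1)) (Some (x2,y2)) = None"
  by (simp add: gadd_def)

lemma gadd_tan: "y \<noteq> 0 \<Longrightarrow> l = (3*x^2+2*a*x+b)/(2*y) \<Longrightarrow>
   gadd a b (Some (x,y)) (Some (x,y)) = Some (l^2 - a - x - x, l*(x - (l^2 - a - x - x)) - y)"
  by (simp add: gadd_def Let_def)

lemma gadd_chord: "x1 \<noteq> x2 \<Longrightarrow> l = (y2-y1)/(x2-x1) \<Longrightarrow>
   gadd a b (Some (x1,y1)) (Some (x2,y2)) = Some (l^2 - a - x1 - x2, l*(x1 - (l^2 - a - x1 - x2)) - y1)"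
  by (simp add: gadd_def Let_def)

definition gon :: "rat \<Rightarrow> rat \<Rightarrow> rat \<Rightarrow> rat \<Rightarrow> rat \<Rightarrow> bool" where
  "gon a b c x y \<longleftrightarrow> y^2 = x^3 + a*x^2 + b*x + c"

lemma W0:
  fixes a b x0 y0 :: rat
  assumes x0: "x0 \<noteq> 0" and b: "b \<noteq> 0" and cu: "y0^2 = x0^3 + a*x0^2 + b*x0"
  shows "gadd a b (gadd a b (Some (x0,y0)) (Some (0,0))) (Some (0,0)) = Some (x0,y0)"
proof -
  define v where "v = y0/x0"
  have y0: "y0 = v*x0" using x0 by (simp add: v_def)
  have bb: "b = v^2*x0 - x0^2 - a*x0"
  proof -
    have "(v*x0)^2 = x0^3 + a*x0^2 + b*x0" using cu y0 by simp
    hence "x0*(v^2*x0) = x0*(x0^2 + a*x0 + b)" by (simp add: power2_eq_square power3_eq_cube algebra_simps)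
    hence "v^2*x0 = x0^2 + a*x0 + b" using x0 by simp
    thus ?thesis by simp
  qed
  define s where "s = v^2 - a - x0 - 0"
  have sb: "s * x0 = b" unfolding s_def bb by (simp add: power2_eq_square algebra_simps)
  have s0: "s \<noteq> 0" using sb b by auto
  have l1: "(0 - y0)/(0 - x0) = v" using x0 by (simp add: v_def)
  have step1: "gadd a b (Some (x0,y0)) (Some (0,0)) = Some (s, v*(x0 - s) - y0)"
    unfolding s_def by (rule gadd_chord[OF x0 l1[symmetric]])
  have l2: "(0 - (v*(x0 - s) - y0))/(0 - s) = - v" using s0 unfolding y0 by (simp add: field_simps)
  have step2: "gadd a b (Some (s, v*(x0 - s) - y0)) (Some (0,0)) = Some (x0, y0)"
    using gadd_chord[OF s0 l2[symmetric], of a b] unfolding s_def y0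
    by (simp add: power2_eq_square algebra_simps)
  show ?thesis using step1 step2 by simp
qed

lemma gadd_chord': "x1 \<noteq> x2 \<Longrightarrow> gadd a b (Some (x1,y1)) (Some (x2,y2)) =
   Some (((y2-y1)/(x2-x1))^2 - (a+x1+x2), ((y2-y1)/(x2-x1))*(x1 - (((y2-y1)/(x2-x1))^2 - (a+x1+x2))) - y1)"
  by (simp add: gadd_def Let_def diff_diff_eq)

lemma gadd_tan': "y \<noteq> 0 \<Longrightarrow> gadd a b (Some (x,y)) (Some (x,y)) =
   Some (((3*x^2+2*a*x+b)/(2*y))^2 - (a+x+x), ((3*x^2+2*a*x+b)/(2*y))*(x - (((3*x^2+2*a*x+b)/(2*y))^2 - (a+x+x))) - y)"
  by (simp add: gadd_def Let_def diff_diff_eq)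

lemma frac_pt:
  fixes N1 D1 N2 D2 c1 c2 p1 p2 q1 q2 :: rat
  assumes D1: "D1 \<noteq> 0" and D2: "D2 \<noteq> 0"
  and hx: "N1^2 * D2^2 - c1 * D1^2 * D2^2 = N2^2 * D1^2 - c2 * D1^2 * D2^2"
  and hy: "N1 * (p1*D1^2 - N1^2 + c1*D1^2) * D2 - q1*D1^3*D2 = N2*(p2*D1^2 - N1^2 + c1*D1^2)*D1 - q2*D1^3*D2"
  shows "Some ((N1/D1)^2 - c1, (N1/D1)*(p1 - ((N1/D1)^2 - c1)) - q1) =
         Some ((N2/D2)^2 - c2, (N2/D2)*(p2 - ((N2/D2)^2 - c2)) - q2)"
proof -
  have t: "(N1/D1)^2 - c1 = (N2/D2)^2 - c2"
  proof -
    have e1: "(N1/D1)^2 - c1 = (N1^2 * D2^2 - c1 * D1^2 * D2^2)/(D1^2*D2^2)"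
      using D1 D2 by (simp add: field_simps power2_eq_square)
    have e2: "(N2/D2)^2 - c2 = (N2^2 * D1^2 - c2 * D1^2 * D2^2)/(D1^2*D2^2)"
      using D1 D2 by (simp add: field_simps power2_eq_square)
    show ?thesis unfolding e1 e2 hx ..
  qed
  have y: "(N1/D1)*(p1 - ((N1/D1)^2 - c1)) - q1 = (N2/D2)*(p2 - ((N1/D1)^2 - c1)) - q2"
  proof -
    have e1: "(N1/D1)*(p1 - ((N1/D1)^2 - c1)) - q1 = (N1 * (p1*D1^2 - N1^2 + c1*D1^2) * D2 - q1*D1^3*D2)/(D1^3*D2)"
      using D1 D2 by (simp add: field_simps power2_eq_square power3_eq_cube)
    have e2: "(N2/D2)*(p2 - ((N1/D1)^2 - c1)) - q2 = (N2*(p2*D1^2 - N1^2 + c1*D1^2)*D1 - q2*D1^3*D2)/(D1^3*D2)"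
      using D1 D2 by (simp add: field_simps power2_eq_square power3_eq_cube)
    show ?thesis unfolding e1 e2 hy ..
  qed
  show ?thesis using t y by (simp only: t)
qed

lemma C3:
  fixes a b w x0 y0 s ys x2 y2 :: rat
  assumes w: "w \<noteq> 0" and x0: "x0 \<noteq> 0" and cu: "y0^2 = x0^3 + a*x0^2 + b*x0 + w^2"
  and sdef: "s = ((w - y0)/(0 - x0))^2 - (a + x0 + 0)"
  and ysdef: "ys = ((w - y0)/(0 - x0))*(x0 - s) - y0"
  and x2def: "x2 = ((3*0^2+2*a*0+b)/(2*w))^2 - (a+0+0)"
  and y2def: "y2 = ((3*0^2+2*a*0+b)/(2*w))*(0 - x2) - w"
  and s0: "s \<noteq> 0" and d: "x0 \<noteq> x2"
  shows "gadd a b (Some (x0,y0)) (Some (x2,y2)) = gadd a b (Some (s,ys)) (Some (0,w))"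
proof -
  define v where "v = (y0 - w)/x0"
  have vv: "(w - y0)/(0 - x0) = v" using x0 by (simp add: v_def field_simps)
  have ey0: "y0 = w + v*x0" using x0 by (simp add: v_def field_simps)
  have es: "s = v^2 - a - x0" using sdef unfolding vv by simp
  have eys: "ys = v*(x0 - s) - y0" using ysdef unfolding vv by simp
  define lam where "lam = b/(2*w)"
  have tl: "(3*0^2+2*a*0+b)/(2*w) = lam" by (simp add: lam_def)
  have ex2: "x2 = lam^2 - a" using x2def unfolding tl by simp
  have ey2: "y2 = -lam*x2 - w" using y2def unfolding tl by simp
  have K: "b = 2*w*v + x0*s"
  proof -
    have "(w + v*x0)^2 = x0^3 + a*x0^2 + b*x0 + w^2" using cu ey0 by simp
    hence "x0*(2*w*v + v^2*x0) = x0*(x0^2 + a*x0 + b)"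
      by (simp add: power2_eq_square power3_eq_cube algebra_simps)
    hence "2*w*v + v^2*x0 = x0^2 + a*x0 + b" using x0 by simp
    thus ?thesis unfolding es by (simp add: power2_eq_square algebra_simps)
  qed
  have eb: "b = 2*w*lam" using w by (simp add: lam_def)
  define u where "u = lam - v"
  have wu: "2*w*u = x0*s" using K eb by (simp add: u_def algebra_simps)
  have u0: "u \<noteq> 0" using wu x0 s0 by auto
  define z where "z = x0/(2*u)"
  have ex0: "x0 = 2*u*z" using u0 by (simp add: z_def)
  have ew: "w = z*s" using wu u0 ex0 by (simp add: algebra_simps) 
  have elam: "lam = v + u" by (simp add: u_def)
  have ea: "a = v^2 - x0 - s" using es by simp
  have D1: "x2 - x0 \<noteq> 0" using d by simp
  have D2: "0 - s \<noteq> 0" using s0 by simp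
  have hx: "(y2-y0)^2 * (0-s)^2 - (a+x0+x2) * (x2-x0)^2 * (0-s)^2 = (w-ys)^2 * (x2-x0)^2 - (a+s+0) * (x2-x0)^2 * (0-s)^2"
    unfolding ey2 ex2 eys ey0 ea elam ex0 ew by (simp add: algebra_simps power2_eq_square power3_eq_cube)
  have hy: "(y2-y0) * (x0*(x2-x0)^2 - (y2-y0)^2 + (a+x0+x2)*(x2-x0)^2) * (0-s) - y0*(x2-x0)^3*(0-s) =
     (w-ys)*(s*(x2-x0)^2 - (y2-y0)^2 + (a+x0+x2)*(x2-x0)^2)*(x2-x0) - ys*(x2-x0)^3*(0-s)"
    unfolding ey2 ex2 eys ey0 ea elam ex0 ew by (simp add: algebra_simps power2_eq_square power3_eq_cube)
  show ?thesis
    using frac_pt[OF D1 D2 hx hy] gadd_chord'[OF d, of a b y0 y2] gadd_chord'[OF s0, of a b ys w] by simp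
qed

lemma C2:
  fixes a b w x0 y0 s ys :: rat
  assumes w: "w \<noteq> 0" and x0: "x0 \<noteq> 0" and y0: "y0 \<noteq> 0"
  and x2def: "x0 = ((3*0^2+2*a*0+b)/(2*w))^2 - (a+0+0)"
  and y2def: "y0 = ((3*0^2+2*a*0+b)/(2*w))*(0 - x0) - w"
  and sdef: "s = ((w - y0)/(0 - x0))^2 - (a + x0 + 0)"
  and ysdef: "ys = ((w - y0)/(0 - x0))*(x0 - s) - y0"
  and s0: "s \<noteq> 0"
  shows "gadd a b (Some (x0,y0)) (Some (x0,y0)) = gadd a b (Some (s,ys)) (Some (0,w))"
proof -
  define v where "v = (y0 - w)/x0"
  have vv: "(w - y0)/(0 - x0) = v" using x0 by (simp add: v_def field_simps)
  have es: "s = v^2 - a - x0" using sdef unfolding vv by simp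
  have eys: "ys = v*(x0 - s) - y0" using ysdef unfolding vv by simp
  define lam where "lam = b/(2*w)"
  have tl: "(3*0^2+2*a*0+b)/(2*w) = lam" by (simp add: lam_def)
  have ea: "a = lam^2 - x0" using x2def unfolding tl by simp
  have ey0: "y0 = -lam*x0 - w" using y2def unfolding tl by simp
  have eb: "b = 2*w*lam" using w by (simp add: lam_def)
  define q where "q = w/x0"
  have ew: "w = q*x0" using x0 by (simp add: q_def)
  have ev: "v = -lam - 2*q" using x0 unfolding v_def ey0 ew by (simp add: field_simps)
  have D1: "2*y0 \<noteq> 0" using y0 by simp
  have D2: "0 - s \<noteq> 0" using s0 by simp
  have hx: "(3*x0^2+2*a*x0+b)^2 * (0-s)^2 - (a+x0+x0) * (2*y0)^2 * (0-s)^2 = (w-ys)^2 * (2*y0)^2 - (a+s+0) * (2*y0)^2 * (0-s)^2"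
    unfolding eys es ey0 eb ea ev ew by (simp add: algebra_simps power2_eq_square power3_eq_cube)
  have hy: "(3*x0^2+2*a*x0+b) * (x0*(2*y0)^2 - (3*x0^2+2*a*x0+b)^2 + (a+x0+x0)*(2*y0)^2) * (0-s) - y0*(2*y0)^3*(0-s) =
     (w-ys)*(s*(2*y0)^2 - (3*x0^2+2*a*x0+b)^2 + (a+x0+x0)*(2*y0)^2)*(2*y0) - ys*(2*y0)^3*(0-s)"
    unfolding eys es ey0 eb ea ev ew by (simp add: algebra_simps power2_eq_square power3_eq_cube)
  show ?thesis
    using frac_pt[OF D1 D2 hx hy] gadd_tan'[OF y0, of a b x0] gadd_chord'[OF s0, of a b ys w] by simp
qed

lemma Kfacts:
  fixes a b w x0 y0 s :: rat
  assumes x0: "x0 \<noteq> 0" and cu: "y0^2 = x0^3 + a*x0^2 + b*x0 + w^2"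
  and sdef: "s = ((w - y0)/(0 - x0))^2 - (a + x0 + 0)"
  shows "y0 = w + ((w - y0)/(0 - x0))*x0 \<and> s = ((w - y0)/(0 - x0))^2 - a - x0 \<and> b = 2*w*((w - y0)/(0 - x0)) + x0*s"
proof -
  define v where "v = (w - y0)/(0 - x0)"
  have ey0: "y0 = w + v*x0" using x0 by (simp add: v_def field_simps)
  have es: "s = v^2 - a - x0" using sdef unfolding v_def[symmetric] by simp
  have K: "b = 2*w*v + x0*s"
  proof -
    have "(w + v*x0)^2 = x0^3 + a*x0^2 + b*x0 + w^2" using cu ey0 by simp
    hence "x0*(2*w*v + v^2*x0) = x0*(x0^2 + a*x0 + b)"
      by (simp add: power2_eq_square power3_eq_cube algebra_simps)
    hence "2*w*v + v^2*x0 = x0^2 + a*x0 + b" using x0 by simp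
    thus ?thesis unfolding es by (simp add: power2_eq_square algebra_simps)
  qed
  show ?thesis using ey0 es K unfolding v_def by simp
qed

lemma L_s0:
  fixes a b w x0 y0 s ys x2 y2 :: rat
  assumes w: "w \<noteq> 0" and x0: "x0 \<noteq> 0" and cu: "y0^2 = x0^3 + a*x0^2 + b*x0 + w^2"
  and sdef: "s = ((w - y0)/(0 - x0))^2 - (a + x0 + 0)"
  and ysdef: "ys = ((w - y0)/(0 - x0))*(x0 - s) - y0"
  and x2def: "x2 = ((3*0^2+2*a*0+b)/(2*w))^2 - (a+0+0)"
  and y2def: "y2 = ((3*0^2+2*a*0+b)/(2*w))*(0 - x2) - w"
  and s0: "s = 0"
  shows "ys = -w \<and> x0 = x2 \<and> y0 = -y2"
proof -
  define v where "v = (w - y0)/(0 - x0)"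
  have F: "y0 = w + v*x0" "s = v^2 - a - x0" "b = 2*w*v + x0*s"
    using Kfacts[OF x0 cu sdef] unfolding v_def by auto
  have tl: "(3*0^2+2*a*0+b)/(2*w) = v" using F(3) s0 w by simp
  have ex2: "x2 = v^2 - a" using x2def unfolding tl by simp
  have ey2: "y2 = -v*x2 - w" using y2def unfolding tl by simp
  have eys: "ys = v*(x0 - s) - y0" using ysdef unfolding v_def by simp
  have "x0 = x2" using F(2) s0 ex2 by simp
  moreover have "ys = -w" using eys s0 F(1) by simp
  moreover have "y0 = -y2" using ey2 F(1) \<open>x0 = x2\<close> by simp
  ultimately show ?thesis by simp
qed

lemma L_b1:
  fixes a b w x0 y0 s x2 y2 :: rat
  assumes w: "w \<noteq> 0" and x0: "x0 \<noteq> 0" and cu: "y0^2 = x0^3 + a*x0^2 + b*x0 + w^2"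
  and sdef: "s = ((w - y0)/(0 - x0))^2 - (a + x0 + 0)"
  and x2def: "x2 = ((3*0^2+2*a*0+b)/(2*w))^2 - (a+0+0)"
  and y2def: "y2 = ((3*0^2+2*a*0+b)/(2*w))*(0 - x2) - w"
  and e1: "x0 = x2" and e2: "y0 = -y2"
  shows "s = 0"
proof -
  define v where "v = (w - y0)/(0 - x0)"
  have F: "y0 = w + v*x0" "s = v^2 - a - x0" "b = 2*w*v + x0*s"
    using Kfacts[OF x0 cu sdef] unfolding v_def by auto
  define lam where "lam = b/(2*w)"
  have tl: "(3*0^2+2*a*0+b)/(2*w) = lam" by (simp add: lam_def)
  have ey2: "y2 = -lam*x2 - w" using y2def unfolding tl by simp
  have "(v - lam)*x0 = 0" using F(1) e2 ey2 e1 by (auto simp: algebra_simps)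
  hence "v = lam" using x0 by simp
  moreover have lb: "lam*(2*w) = b" using w by (simp add: lam_def)
  ultimately have "v*(2*w) = 2*w*v + x0*s" using F(3) by simp
  hence "x0*s = 0" by (simp add: algebra_simps)
  thus ?thesis using x0 by simp
qed

lemma tanOn:
  fixes a b w x2 y2 :: rat
  assumes w: "w \<noteq> 0"
  and x2def: "x2 = ((3*0^2+2*a*0+b)/(2*w))^2 - (a+0+0)"
  and y2def: "y2 = ((3*0^2+2*a*0+b)/(2*w))*(0 - x2) - w"
  shows "y2^2 = x2^3 + a*x2^2 + b*x2 + w^2"
proof -
  define lam where "lam = b/(2*w)"
  have tl: "(3*0^2+2*a*0+b)/(2*w) = lam" by (simp add: lam_def)
  have ex2: "x2 = lam^2 - a" using x2def unfolding tl by simp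
  have ey2: "y2 = -lam*x2 - w" using y2def unfolding tl by simp
  have eb: "b = 2*w*lam" using w by (simp add: lam_def)
  show ?thesis unfolding ey2 ex2 eb by (simp add: algebra_simps power2_eq_square power3_eq_cube)
qed

lemma negP:
  fixes a b w x2 y2 :: rat
  assumes w: "w \<noteq> 0"
  and x2def: "x2 = ((3*0^2+2*a*0+b)/(2*w))^2 - (a+0+0)"
  and y2def: "y2 = ((3*0^2+2*a*0+b)/(2*w))*(0 - x2) - w"
  shows "gadd a b (Some (0,-w)) (Some (x2,y2)) = Some (0,w)"
proof -
  define lam where "lam = b/(2*w)"
  have tl: "(3*0^2+2*a*0+b)/(2*w) = lam" by (simp add: lam_def)
  have ex2: "x2 = lam^2 - a" using x2def unfolding tl by simp
  have ey2: "y2 = -lam*x2 - w" using y2def unfolding tl by simp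
  show ?thesis
  proof (cases "x2 = 0")
    case True
    hence y2: "y2 = -w" using ey2 by simp
    have mw: "-w \<noteq> 0" using w by simp
    have sl: "(3*0^2+2*a*0+b)/(2*(-w)) = -lam" by (simp add: lam_def)
    show ?thesis unfolding True y2 gadd_tan'[OF mw] sl using True ex2 by simp
  next
    case False
    have sl: "(y2 - (-w))/(x2 - 0) = -lam" using False ey2 by (simp add: field_simps)
    have "0 \<noteq> x2" using False by simp
    show ?thesis unfolding gadd_chord'[OF \<open>0 \<noteq> x2\<close>] sl using ex2 by simp
  qed
qed

lemma gcomm:
  fixes a b c :: rat
  assumes c1: "y1^2 = x1^3 + a*x1^2 + b*x1 + c" and c2: "y2^2 = x2^3 + a*x2^2 + b*x2 + c"
  shows "gadd a b (Some (x1,y1)) (Some (x2,y2)) = gadd a b (Some (x2,y2)) (Some (x1,y1))"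
proof (cases "x1 = x2")
  case True
  hence "y1^2 = y2^2" using c1 c2 by simp
  hence "y1 = y2 \<or> y1 = -y2" by (simp add: power2_eq_iff)
  thus ?thesis using True by (auto simp: gadd_def)
next
  case False
  hence F2: "x2 \<noteq> x1" by simp
  have l: "(y1 - y2)/(x1 - x2) = (y2-y1)/(x2-x1)" using False by (simp add: field_simps)
  have e: "((y2-y1)/(x2-x1))*(x1 - (((y2-y1)/(x2-x1))^2 - (a+x1+x2))) - y1 =
           ((y2-y1)/(x2-x1))*(x2 - (((y2-y1)/(x2-x1))^2 - (a+x2+x1))) - y2"
  proof -
    define l where "l = (y2-y1)/(x2-x1)"
    have "l*(x1 - x2) = y1 - y2" using False by (simp add: l_def field_simps)
    hence "l*(x1 - (l^2 - (a+x1+x2))) - y1 = l*(x2 - (l^2 - (a+x2+x1))) - y2" by (simp add: algebra_simps)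
    thus ?thesis by (simp add: l_def)
  qed
  show ?thesis unfolding gadd_chord'[OF False] gadd_chord'[OF F2] l using e by (simp add: add.commute add.left_commute)
qed

lemma D0:
  fixes a b w :: rat and Z :: "(rat \<times> rat) option"
  assumes Z: "Z = None \<or> (\<exists>x0 y0. Z = Some (x0,y0) \<and> y0^2 = x0^3 + a*x0^2 + b*x0 + w^2)"
  and ns: "w = 0 \<Longrightarrow> b \<noteq> 0"
  shows "gadd a b Z (gadd a b (Some (0,w)) (Some (0,w))) = gadd a b (gadd a b Z (Some (0,w))) (Some (0,w))"
proof (cases "Z = None")
  case True thus ?thesis by simp
next
  case False
  then obtain x0 y0 where ZS: "Z = Some (x0,y0)" and cu: "y0^2 = x0^3 + a*x0^2 + b*x0 + w^2" using Z by auto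
  show ?thesis
  proof (cases "w = 0")
    case True
    have PP: "gadd a b (Some (0,w)) (Some (0,w)) = None" using True by (simp add: gadd_opp)
    show ?thesis
    proof (cases "x0 = 0")
      case True
      hence "y0 = 0" using cu \<open>w = 0\<close> by simp
      then show ?thesis using ZS True PP \<open>w=0\<close> by simp
    next
      case False
      show ?thesis using W0[OF False ns[OF \<open>w=0\<close>]] cu \<open>w=0\<close> ZS PP by simp
    qed
  next
    case w: False
    define x2 where "x2 = ((3*0^2+2*a*0+b)/(2*w))^2 - (a+0+0)"
    define y2 where "y2 = ((3*0^2+2*a*0+b)/(2*w))*(0 - x2) - w"
    have PP: "gadd a b (Some (0,w)) (Some (0,w)) = Some (x2,y2)"
      unfolding y2_def x2_def by (rule gadd_tan'[OF w])
    have on2: "y2^2 = x2^3 + a*x2^2 + b*x2 + w^2" by (rule tanOn[OF w x2_def y2_def])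
    show ?thesis
    proof (cases "x0 = 0")
      case True
      hence "y0^2 = w^2" using cu by simp
      hence "y0 = w \<or> y0 = -w" by (simp add: power2_eq_iff)
      thus ?thesis
      proof
        assume "y0 = w"
        hence ZP: "Z = Some (0,w)" using ZS True by simp
        have cw: "w^2 = 0^3 + a*0^2 + b*0 + w^2" by simp
        show ?thesis unfolding ZP PP using gcomm[OF cw on2] by simp
      next
        assume "y0 = -w"
        hence ZP: "Z = Some (0,-w)" using ZS True by simp
        have "gadd a b Z (Some (0,w)) = None" unfolding ZP by (rule gadd_opp) simp_all
        thus ?thesis unfolding PP using negP[OF w x2_def y2_def] ZP by simp
      qed
    next
      case x0: False
      define s where "s = ((w - y0)/(0 - x0))^2 - (a + x0 + 0)"
      define ys where "ys = ((w - y0)/(0 - x0))*(x0 - s) - y0"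
      have ZPs: "gadd a b (Some (x0,y0)) (Some (0,w)) = Some (s, ys)" unfolding ys_def s_def by (rule gadd_chord'[OF x0])
      show ?thesis
      proof (cases "s = 0")
        case True
        from L_s0[OF w x0 cu s_def ys_def x2_def y2_def True]
        have h: "ys = -w" "x0 = x2" "y0 = -y2" by auto
        have "gadd a b (Some (s,ys)) (Some (0,w)) = None" using True h by (simp add: gadd_opp)
        moreover have "gadd a b (Some (x0,y0)) (Some (x2,y2)) = None" using h by (simp add: gadd_opp)
        ultimately show ?thesis unfolding ZS PP ZPs by simp
      next
        case s0: False
        show ?thesis
        proof (cases "x0 = x2")
          case True
          show ?thesis
          proof (cases "y0 = -y2")
            case True
            have "s = 0" using L_b1[OF w x0 cu s_def x2_def y2_def \<open>x0 = x2\<close> True] .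
            thus ?thesis using s0 by simp
          next
            case False
            have "y0^2 = y2^2" using cu on2 \<open>x0 = x2\<close> by simp
            hence "y0 = y2" using False by (simp add: power2_eq_iff)
            have y00: "y0 \<noteq> 0" using False \<open>y0 = y2\<close> by auto
            have x0d: "x0 = ((3*0^2+2*a*0+b)/(2*w))^2 - (a+0+0)" using \<open>x0 = x2\<close> x2_def by simp
            have y0d: "y0 = ((3*0^2+2*a*0+b)/(2*w))*(0 - x0) - w" using \<open>y0 = y2\<close> \<open>x0 = x2\<close> y2_def by simp
            show ?thesis unfolding ZS PP ZPs using C2[OF w x0 y00 x0d y0d s_def ys_def s0] \<open>x0 = x2\<close> \<open>y0 = y2\<close> by simp
          qed
        next
          case False
          show ?thesis unfolding ZS PP ZPs using C3[OF w x0 cu s_def ys_def x2_def y2_def s0 False] by simp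
        qed
      qed
    qed
  qed
qed

definition sh :: "rat \<Rightarrow> (rat \<times> rat) option \<Rightarrow> (rat \<times> rat) option" where
  "sh h P = map_option (\<lambda>(x,y). (x - h, y)) P"

lemma sh_simps[simp]: "sh h None = None" "sh h (Some (x,y)) = Some (x - h, y)"
  by (simp_all add: sh_def)

lemma sh_inj: "sh h P = sh h Q \<Longrightarrow> P = Q"
  by (cases P; cases Q) (auto simp: sh_def)

definition tsl :: "rat \<Rightarrow> rat \<Rightarrow> rat \<Rightarrow> rat \<Rightarrow> rat" where
  "tsl a b x y = (3*x^2+2*a*x+b)/(2*y)"

lemma gadd_eq: "gadd a b (Some (x1,y1)) (Some (x2,y2)) = (if x1 = x2 \<and> y1 = -y2 then None else
   (let l = (if x1 = x2 then tsl a b x1 y1 else (y2-y1)/(x2-x1)) in Some (l^2 - a - x1 - x2, l*(x1 - (l^2 - a - x1 - x2)) - y1)))"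
  by (simp add: gadd_def tsl_def Let_def)

lemma tsl_shift: "tsl (a + 3*h) (b + 2*a*h + 3*h^2) (x - h) y = tsl a b x y"
proof -
  have "3*(x-h)^2 + 2*(a+3*h)*(x-h) + (b + 2*a*h + 3*h^2) = 3*x^2 + 2*a*x + b"
    by (simp add: algebra_simps power2_eq_square)
  thus ?thesis unfolding tsl_def by simp
qed

lemma gadd_shift: "gadd (a + 3*h) (b + 2*a*h + 3*h^2) (sh h P) (sh h Q) = sh h (gadd a b P Q)"
proof (cases P)
  case None thus ?thesis by simp
next
  case (Some p)
  obtain x1 y1 where p: "p = (x1,y1)" by (cases p)
  show ?thesis
  proof (cases Q)
    case None thus ?thesis using Some by simp
  next
    case (Some q)
    obtain x2 y2 where q: "q = (x2,y2)" by (cases q)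
    have e1: "x1 - h = x2 - h \<longleftrightarrow> x1 = x2" by auto
    have e2: "\<And>l. l^2 - (a + 3*h) - (x1 - h) - (x2 - h) = (l^2 - a - x1 - x2) - h" by (simp add: algebra_simps)
    have e3: "\<And>l. l*(x1 - h - ((l^2 - a - x1 - x2) - h)) - y1 = l*(x1 - (l^2 - a - x1 - x2)) - y1" by (simp add: algebra_simps)
    have e4: "(y2 - y1)/((x2 - h) - (x1 - h)) = (y2-y1)/(x2-x1)" by simp
    show ?thesis using \<open>P = Some p\<close> Some p q
      by (simp only: sh_simps gadd_eq e1 e4 tsl_shift Let_def e2 e3 split: if_splits) auto
  qed
qed

definition gpts :: "rat \<Rightarrow> rat \<Rightarrow> rat \<Rightarrow> (rat \<times> rat) option set" where
  "gpts a b c = insert None (Some ` {(x,y). y^2 = x^3 + a*x^2 + b*x + c})"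

lemma gpts_Some: "Some (x,y) \<in> gpts a b c \<longleftrightarrow> y^2 = x^3 + a*x^2 + b*x + c"
  by (auto simp: gpts_def)

lemma gpts_None[simp]: "None \<in> gpts a b c" by (simp add: gpts_def)

lemma sh_gpts: "P \<in> gpts a b c \<Longrightarrow> sh h P \<in> gpts (a + 3*h) (b + 2*a*h + 3*h^2) (h^3 + a*h^2 + b*h + c)"
proof (cases P)
  case None thus ?thesis by simp
next
  case (Some p)
  obtain x y where p: "p = (x,y)" by (cases p)
  assume "P \<in> gpts a b c"
  hence "y^2 = x^3 + a*x^2 + b*x + c" using Some p by (simp add: gpts_Some)
  moreover have "x^3 + a*x^2 + b*x + c = (x-h)^3 + (a + 3*h)*(x-h)^2 + (b + 2*a*h + 3*h^2)*(x-h) + (h^3 + a*h^2 + b*h + c)"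
    by (simp add: algebra_simps power2_eq_square power3_eq_cube)
  ultimately show ?thesis using Some p by (simp add: gpts_Some)
qed

lemma chordOn:
  fixes a b w x0 y0 :: rat
  assumes x0: "x0 \<noteq> 0" and cu: "y0^2 = x0^3 + a*x0^2 + b*x0 + w^2"
  shows "Some (((y0-w)/(x0-0))^2 - (a+0+x0), ((y0-w)/(x0-0))*(0 - (((y0-w)/(x0-0))^2 - (a+0+x0))) - w) \<in> gpts a b (w^2)"
proof -
  define v where "v = (y0-w)/(x0-0)"
  have ey0: "y0 = w + v*x0" using x0 by (simp add: v_def field_simps)
  have K: "b = 2*w*v + v^2*x0 - x0^2 - a*x0"
  proof -
    have "(w + v*x0)^2 = x0^3 + a*x0^2 + b*x0 + w^2" using cu ey0 by simp
    hence "x0*(2*w*v + v^2*x0) = x0*(x0^2 + a*x0 + b)"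
      by (simp add: power2_eq_square power3_eq_cube algebra_simps)
    hence "2*w*v + v^2*x0 = x0^2 + a*x0 + b" using x0 by simp
    thus ?thesis by simp
  qed
  have "(v*(0 - (v^2 - (a+0+x0))) - w)^2 = (v^2 - (a+0+x0))^3 + a*(v^2 - (a+0+x0))^2 + b*(v^2 - (a+0+x0)) + w^2"
    unfolding K by (simp add: algebra_simps power2_eq_square power3_eq_cube)
  thus ?thesis unfolding v_def[symmetric] by (simp add: gpts_Some)
qed

lemma tanOn0:
  fixes a b w :: rat
  assumes w: "w \<noteq> 0"
  shows "gadd a b (Some (0,w)) (Some (0,w)) \<in> gpts a b (w^2)"
proof -
  define x2 where "x2 = ((3*0^2+2*a*0+b)/(2*w))^2 - (a+0+0)"
  define y2 where "y2 = ((3*0^2+2*a*0+b)/(2*w))*(0 - x2) - w"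
  have PP: "gadd a b (Some (0,w)) (Some (0,w)) = Some (x2,y2)"
    unfolding y2_def x2_def by (rule gadd_tan'[OF w])
  show ?thesis unfolding PP gpts_Some by (rule tanOn[OF w x2_def y2_def])
qed

lemma closed0:
  fixes a b w :: rat
  assumes Q: "Q \<in> gpts a b (w^2)"
  shows "gadd a b (Some (0,w)) Q \<in> gpts a b (w^2)"
proof (cases Q)
  case None thus ?thesis by (simp add: gpts_Some)
next
  case (Some q)
  obtain x0 y0 where q: "q = (x0,y0)" by (cases q)
  have cu: "y0^2 = x0^3 + a*x0^2 + b*x0 + w^2" using Q Some q by (simp add: gpts_Some)
  show ?thesis
  proof (cases "x0 = 0")
    case True
    hence "y0^2 = w^2" using cu by simp
    hence "y0 = w \<or> y0 = -w" by (simp add: power2_eq_iff)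
    thus ?thesis
    proof
      assume "y0 = -w"
      thus ?thesis using Some q True by (simp add: gadd_opp)
    next
      assume y: "y0 = w"
      show ?thesis
      proof (cases "w = 0")
        case True thus ?thesis using Some q y \<open>x0 = 0\<close> by (simp add: gadd_opp)
      next
        case False thus ?thesis using Some q y \<open>x0 = 0\<close> tanOn0[OF False] by simp
      qed
    qed
  next
    case False
    hence "0 \<noteq> x0" by simp
    show ?thesis using Some q gadd_chord'[OF \<open>0 \<noteq> x0\<close>, of a b w y0] chordOn[OF False cu] by simp
  qed
qed

lemma gclosed:
  assumes P: "P \<in> gpts a b c" and Q: "Q \<in> gpts a b c"
  shows "gadd a b P Q \<in> gpts a b c"
proof (cases P)
  case None thus ?thesis using Q by simp
next
  case (Some p)
  obtain h w where p: "p = (h,w)" by (cases p)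
  have cP: "w^2 = h^3 + a*h^2 + b*h + c" using P Some p by (simp add: gpts_Some)
  define a' where "a' = a + 3*h"
  define b' where "b' = b + 2*a*h + 3*h^2"
  have c': "h^3 + a*h^2 + b*h + c = w^2" using cP by simp
  have Q': "sh h Q \<in> gpts a' b' (w^2)" using sh_gpts[OF Q, of h] unfolding a'_def b'_def c' .
  have "gadd a' b' (Some (0,w)) (sh h Q) \<in> gpts a' b' (w^2)" by (rule closed0[OF Q'])
  hence "sh h (gadd a b P Q) \<in> gpts a' b' (w^2)"
    using gadd_shift[of a h b P Q] Some p unfolding a'_def b'_def by simp
  hence "sh (-h) (sh h (gadd a b P Q)) \<in> gpts (a' + 3*(-h)) (b' + 2*a'*(-h) + 3*(-h)^2) ((-h)^3 + a'*(-h)^2 + b'*(-h) + w^2)"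
    by (rule sh_gpts)
  moreover have "sh (-h) (sh h R) = R" for R by (cases R) (auto simp: sh_def)
  moreover have "a' + 3*(-h) = a" "b' + 2*a'*(-h) + 3*(-h)^2 = b" "(-h)^3 + a'*(-h)^2 + b'*(-h) + w^2 = c"
    unfolding a'_def b'_def cP by (simp_all add: algebra_simps power2_eq_square power3_eq_cube)
  ultimately show ?thesis by simp
qed

lemma Dgen:
  assumes ns: "\<forall>x. x^3 + a*x^2 + b*x + c = 0 \<longrightarrow> 3*x^2 + 2*a*x + b \<noteq> 0"
  and Z: "Z \<in> gpts a b c" and P: "P \<in> gpts a b c"
  shows "gadd a b Z (gadd a b P P) = gadd a b (gadd a b Z P) P"
proof (cases P)
  case None thus ?thesis by simp
next
  case (Some p)
  obtain h w where p: "p = (h,w)" by (cases p)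
  have cP: "w^2 = h^3 + a*h^2 + b*h + c" using P Some p by (simp add: gpts_Some)
  define a' where "a' = a + 3*h"
  define b' where "b' = b + 2*a*h + 3*h^2"
  have c': "h^3 + a*h^2 + b*h + c = w^2" using cP by simp
  have Z': "sh h Z \<in> gpts a' b' (w^2)" using sh_gpts[OF Z, of h] unfolding a'_def b'_def c' .
  have Z'': "sh h Z = None \<or> (\<exists>x0 y0. sh h Z = Some (x0,y0) \<and> y0^2 = x0^3 + a'*x0^2 + b'*x0 + w^2)"
    using Z' by (auto simp: gpts_def)
  have ns': "w = 0 \<Longrightarrow> b' \<noteq> 0"
  proof -
    assume "w = 0"
    hence "h^3 + a*h^2 + b*h + c = 0" using cP by simp
    hence "3*h^2 + 2*a*h + b \<noteq> 0" using ns by blast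
    thus "b' \<noteq> 0" unfolding b'_def by (simp add: algebra_simps)
  qed
  have shP: "sh h P = Some (0,w)" using Some p by simp
  have "gadd a' b' (sh h Z) (gadd a' b' (sh h P) (sh h P)) = gadd a' b' (gadd a' b' (sh h Z) (sh h P)) (sh h P)"
    unfolding shP by (rule D0[OF Z'' ns'])
  hence "sh h (gadd a b Z (gadd a b P P)) = sh h (gadd a b (gadd a b Z P) P)"
    unfolding a'_def b'_def gadd_shift by simp
  thus ?thesis by (rule sh_inj)
qed

definition gneg :: "(rat \<times> rat) option \<Rightarrow> (rat \<times> rat) option" where
  "gneg P = map_option (\<lambda>(x,y). (x, -y)) P"

lemma gneg_simps[simp]: "gneg None = None" "gneg (Some (x,y)) = Some (x,-y)"
  by (simp_all add: gneg_def)

lemma gneg_gneg[simp]: "gneg (gneg P) = P" by (cases P) (auto simp: gneg_def)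

lemma gneg_gpts: "P \<in> gpts a b c \<Longrightarrow> gneg P \<in> gpts a b c"
  by (cases P) (auto simp: gpts_Some)

lemma gadd_gneg: "gadd a b (gneg P) (gneg Q) = gneg (gadd a b P Q)"
proof (cases P)
  case None thus ?thesis by simp
next
  case (Some p)
  obtain x1 y1 where p: "p = (x1,y1)" by (cases p)
  show ?thesis
  proof (cases Q)
    case None thus ?thesis using Some by simp
  next
    case (Some q)
    obtain x2 y2 where q: "q = (x2,y2)" by (cases q)
    have t: "\<And>xx yy. tsl a b xx (-yy) = - tsl a b xx yy" by (simp add: tsl_def)
    have c: "(y1 - y2)/(x2 - x1) = - ((y2 - y1)/(x2-x1))" by (simp add: minus_divide_left)
    show ?thesis using \<open>P = Some p\<close> Some p q
      by (auto simp: gadd_eq Let_def t c)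
  qed
qed

lemma gadd_self_neg: "gadd a b P (gneg P) = None"
  by (cases P) (auto simp: gadd_eq)

lemma desc:
  fixes x y e1 e2 e3 Xd Yd :: rat
  assumes y: "y \<noteq> 0" and cu: "y^2 = (x-e1)*(x-e2)*(x-e3)"
  and D: "gadd (-(e1+e2+e3)) (e1*e2+e1*e3+e2*e3) (Some (x,y)) (Some (x,y)) = Some (Xd,Yd)"
  shows "Xd - e1 = (((x-e1)^2 - (e1-e2)*(e1-e3))/(2*y))^2"
proof -
  define T where "T = 3*x^2+2*(-(e1+e2+e3))*x+(e1*e2+e1*e3+e2*e3)"
  define K where "K = -(e1+e2+e3)+x+x"
  define N where "N = (x-e1)^2 - (e1-e2)*(e1-e3)"
  have X: "Xd = (T/(2*y))^2 - K"
    using D gadd_tan'[OF y] unfolding T_def K_def by simp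
  have "T^2 - (K + e1) * (4*((x-e1)*(x-e2)*(x-e3))) = N^2"
    unfolding T_def K_def N_def by (simp add: algebra_simps power2_eq_square)
  hence h: "T^2 - (K + e1) * (2*y)^2 = N^2"
    using cu by (simp add: power_mult_distrib)
  have "Xd - e1 = (T/(2*y))^2 - (K + e1)" unfolding X by simp
  also have "... = (T^2 - (K+e1)*(2*y)^2)/(2*y)^2" using y by (simp add: field_simps power2_eq_square)
  also have "... = N^2/(2*y)^2" unfolding h ..
  also have "... = (N/(2*y))^2" by (simp add: power_divide)
  finally show ?thesis unfolding N_def .
qed

lemma quartic:
  fixes x y A B :: rat
  assumes y: "y \<noteq> 0" and cu: "y^2 = x^3 + A*x^2 + B*x"
  and D: "gadd A B (Some (x,y)) (Some (x,y)) = Some (x,Yd)"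
  shows "3*x^4 + 4*A*x^3 + 6*B*x^2 - B^2 = 0"
proof -
  have Xd: "x = ((3*x^2+2*A*x+B)/(2*y))^2 - (A+x+x)"
    using D gadd_tan'[OF y] by simp
  hence "(3*x^2+2*A*x+B)^2/(2*y)^2 = A + 3*x" by (simp add: power_divide algebra_simps)
  hence "(3*x^2+2*A*x+B)^2 = (A + 3*x) * (2*y)^2" using y by (simp add: field_simps)
  hence "(3*x^2+2*A*x+B)^2 = (A + 3*x) * (4*(x^3 + A*x^2 + B*x))" using cu by (simp add: power_mult_distrib)
  thus ?thesis by (simp add: algebra_simps power2_eq_square power3_eq_cube) (simp add: power_def algebra_simps)
qed

abbreviation AA :: "int \<Rightarrow> int \<Rightarrow> rat" where "AA m n \<equiv> of_int (m+n)"
abbreviation BB :: "int \<Rightarrow> int \<Rightarrow> rat" where "BB m n \<equiv> of_int (m*n)"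

lemma E_carrier: "carrier (E_group m n) = gpts (AA m n) (BB m n) 0"
proof -
  have id: "\<And>x. x*(x + of_int m)*(x + of_int n) = x^3 + AA m n*x^2 + BB m n*x + 0"
      by (simp add: algebra_simps power2_eq_square power3_eq_cube)
  have "{P. on_curve m n P} = {(x,y). y^2 = x^3 + AA m n*x^2 + BB m n*x + 0}"
    by (auto simp: on_curve_def id simp del: of_int_add of_int_mult)
  thus ?thesis by (simp add: E_group_def gpts_def)
qed

lemma E_mult: "monoid.mult (E_group m n) = gadd (AA m n) (BB m n)"
  by (simp add: E_group_def ec_add_gadd)

lemma E_one: "one (E_group m n) = None" by (simp add: E_group_def)

lemma Epow_0[simp]: "P [^]\<^bsub>E_group m n\<^esub> (0::nat) = None" by (simp add: E_one)
lemma Epow_Suc: "P [^]\<^bsub>E_group m n\<^esub> (Suc k) = gadd (AA m n) (BB m n) (P [^]\<^bsub>E_group m n\<^esub> k) P"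
  by (simp add: E_mult)

lemma tors_iff: "P \<in> torsion_points m n \<longleftrightarrow> P \<in> gpts (AA m n) (BB m n) 0 \<and> (\<exists>k::nat. k > 0 \<and> P [^]\<^bsub>E_group m n\<^esub> k = None)"
  by (simp add: torsion_points_def E_carrier E_one)

lemma pow_gpts: "P \<in> gpts (AA m n) (BB m n) 0 \<Longrightarrow> P [^]\<^bsub>E_group m n\<^esub> (k::nat) \<in> gpts (AA m n) (BB m n) 0"
  by (induction k) (simp_all add: Epow_Suc gclosed E_one del: nat_pow_Suc of_int_add of_int_mult)

lemma pow_double:
  assumes ns: "\<forall>x. x^3 + AA m n*x^2 + BB m n*x + 0 = 0 \<longrightarrow> 3*x^2 + 2*AA m n*x + BB m n \<noteq> 0"
  and P: "P \<in> gpts (AA m n) (BB m n) 0"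
  shows "(gadd (AA m n) (BB m n) P P) [^]\<^bsub>E_group m n\<^esub> (i::nat) = P [^]\<^bsub>E_group m n\<^esub> (2*i)"
proof (induction i)
  case 0 thus ?case by simp
next
  case (Suc i)
  have e: "2 * Suc i = Suc (Suc (2*i))" by simp
  show ?case unfolding e Epow_Suc Suc.IH
    by (rule Dgen[OF ns pow_gpts[OF P] P])
qed

lemma pow_period:
  assumes "P [^]\<^bsub>E_group m n\<^esub> (k::nat) = None"
  shows "P [^]\<^bsub>E_group m n\<^esub> (k + j) = P [^]\<^bsub>E_group m n\<^esub> j"
proof (induction j)
  case 0 thus ?case using assms by (simp add: E_one)
next
  case (Suc j)
  have "k + Suc j = Suc (k + j)" by simp
  thus ?case using Suc.IH by (simp add: Epow_Suc del: nat_pow_Suc)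
qed

lemma tors_double:
  assumes ns: "\<forall>x. x^3 + AA m n*x^2 + BB m n*x + 0 = 0 \<longrightarrow> 3*x^2 + 2*AA m n*x + BB m n \<noteq> 0"
  and P: "P \<in> torsion_points m n"
  shows "gadd (AA m n) (BB m n) P P \<in> torsion_points m n"
proof -
  obtain k :: nat where k: "k > 0" "P [^]\<^bsub>E_group m n\<^esub> k = None" and Pg: "P \<in> gpts (AA m n) (BB m n) 0"
    using P tors_iff by blast
  have "(gadd (AA m n) (BB m n) P P) [^]\<^bsub>E_group m n\<^esub> k = P [^]\<^bsub>E_group m n\<^esub> (k + k)"
    using pow_double[OF ns Pg, of k] by (simp add: mult_2)
  also have "... = None" using pow_period[OF k(2), of k] k(2) by simp
  finally show ?thesis using k(1) gclosed[OF Pg Pg] tors_iff by blast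
qed

lemma pow_gneg: "(gneg P) [^]\<^bsub>E_group m n\<^esub> (k::nat) = gneg (P [^]\<^bsub>E_group m n\<^esub> k)"
  by (induction k) (simp_all add: Epow_Suc gadd_gneg E_one del: nat_pow_Suc)

lemma tors_neg: "P \<in> torsion_points m n \<Longrightarrow> gneg P \<in> torsion_points m n"
  unfolding tors_iff using pow_gneg gneg_gpts by (metis gneg_simps(1))

lemma tors_None: "None \<in> torsion_points m n"
  unfolding tors_iff by (intro conjI exI[of _ 1]) (simp_all add: Epow_Suc E_one del: nat_pow_Suc)

lemma Et_carrier: "carrier (E_torsion m n) = torsion_points m n" by (simp add: E_torsion_def)
lemma Et_mult: "monoid.mult (E_torsion m n) = gadd (AA m n) (BB m n)"
  by (simp add: E_torsion_def E_mult)

lemma iso_facts: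
  assumes iso: "\<phi> \<in> iso (E_torsion m n) (integer_mod_group 2 \<times>\<times> integer_mod_group N)" and N: "N > 0"
  shows "inj_on \<phi> (torsion_points m n)"
    and "\<phi> ` torsion_points m n = {0..<2} \<times> {0..<int N}"
    and "\<And>x y. x \<in> torsion_points m n \<Longrightarrow> y \<in> torsion_points m n \<Longrightarrow>
          \<phi> (gadd (AA m n) (BB m n) x y) = ((fst (\<phi> x) + fst (\<phi> y)) mod 2, (snd (\<phi> x) + snd (\<phi> y)) mod int N)"
proof -
  have h: "\<phi> \<in> hom (E_torsion m n) (integer_mod_group 2 \<times>\<times> integer_mod_group N)"
    and b: "bij_betw \<phi> (torsion_points m n) ({0..<2} \<times> {0..<int N})"
    using iso N by (auto simp: iso_def Et_carrier carrier_integer_mod_group)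
  show "inj_on \<phi> (torsion_points m n)" using b by (simp add: bij_betw_def)
  show "\<phi> ` torsion_points m n = {0..<2} \<times> {0..<int N}" using b by (simp add: bij_betw_def)
  fix x y assume "x \<in> torsion_points m n" "y \<in> torsion_points m n"
  hence "\<phi> (monoid.mult (E_torsion m n) x y) = monoid.mult (integer_mod_group 2 \<times>\<times> integer_mod_group N) (\<phi> x) (\<phi> y)"
    using h by (simp add: hom_def Et_carrier)
  thus "\<phi> (gadd (AA m n) (BB m n) x y) = ((fst (\<phi> x) + fst (\<phi> y)) mod 2, (snd (\<phi> x) + snd (\<phi> y)) mod int N)"
    by (simp add: Et_mult mult_DirProd' del: of_int_add of_int_mult)
qed

lemma vzero: fixes v N :: int assumes "0 \<le> v" "v < N" "(v + v) mod N = v" shows "v = 0"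
proof (cases "v + v < N")
  case True thus ?thesis using assms by (simp add: mod_pos_pos_trivial)
next
  case False
  have "(v + v) mod N = (v + v - N + N) mod N" by simp
  also have "... = (v + v - N) mod N" by (rule mod_add_self2)
  also have "... = v + v - N" using False assms by (intro mod_pos_pos_trivial) auto
  finally show ?thesis using assms by simp
qed

lemma phi_None:
  assumes iso: "\<phi> \<in> iso (E_torsion m n) (integer_mod_group 2 \<times>\<times> integer_mod_group N)" and N: "N > 0"
  shows "\<phi> None = (0,0)"
proof -
  note F = iso_facts[OF iso N]
  have T: "None \<in> torsion_points m n" by (rule tors_None)
  obtain u v where uv: "\<phi> None = (u,v)" by (cases "\<phi> None")
  have "\<phi> None \<in> \<phi> ` torsion_points m n" using T by (rule imageI)
  hence "(u,v) \<in> {0..<2} \<times> {0..<int N}" unfolding F(2) uv .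
  hence r: "0 \<le> u" "u < 2" "0 \<le> v" "v < int N" by auto
  have "\<phi> None = \<phi> (gadd (AA m n) (BB m n) None None)" by simp
  also have "... = ((u + u) mod 2, (v + v) mod int N)" using F(3)[OF T T] uv by simp
  finally have "(u,v) = ((u + u) mod 2, (v + v) mod int N)" unfolding uv .
  hence e: "(u + u) mod 2 = u" "(v + v) mod int N = v" by simp_all
  have "u = 0" using e(1) r(1,2) by presburger
  moreover have "v = 0" by (rule vzero[OF r(3,4) e(2)])
  ultimately show ?thesis using uv by simp
qed

lemma get_half:
  assumes iso: "\<phi> \<in> iso (E_torsion m n) (integer_mod_group 2 \<times>\<times> integer_mod_group N)" and N: "N > 0"
  and ns: "\<forall>x. x^3 + AA m n*x^2 + BB m n*x + 0 = 0 \<longrightarrow> 3*x^2 + 2*AA m n*x + BB m n \<noteq> 0"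
  and g: "0 \<le> g" "g < int N" and g1: "(g+g) mod int N \<noteq> 0" and g2: "((g+g) mod int N + (g+g) mod int N) mod int N = 0"
  shows "\<exists>xa ya e. ya \<noteq> 0 \<and> Some (xa,ya) \<in> gpts (AA m n) (BB m n) 0 \<and>
           gadd (AA m n) (BB m n) (Some (xa,ya)) (Some (xa,ya)) = Some (e, 0)"
proof -
  note F = iso_facts[OF iso N]
  have z: "\<phi> None = (0,0)" by (rule phi_None[OF iso N])
  have "(0,g) \<in> \<phi> ` torsion_points m n" unfolding F(2) using g by simp
  then obtain a where aT: "a \<in> torsion_points m n" and pa: "\<phi> a = (0,g)" by auto
  define c where "c = gadd (AA m n) (BB m n) a a"
  have cT: "c \<in> torsion_points m n" unfolding c_def by (rule tors_double[OF ns aT])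
  have pc: "\<phi> c = (0, (g+g) mod int N)" unfolding c_def using F(3)[OF aT aT] pa by simp
  define d where "d = gadd (AA m n) (BB m n) c c"
  have dT: "d \<in> torsion_points m n" unfolding d_def by (rule tors_double[OF ns cT])
  have pd: "\<phi> d = (0,0)" unfolding d_def using F(3)[OF cT cT] pc g2 by simp
  have "\<phi> d = \<phi> None" using pd z by simp
  hence dN: "d = None" by (rule inj_onD[OF F(1) _ dT tors_None])
  have cN: "c \<noteq> None"
  proof
    assume "c = None"
    hence "\<phi> c = (0,0)" using z by simp
    thus False using pc g1 by simp
  qed
  then obtain e yc where ce: "c = Some (e,yc)" by auto
  have "yc = 0"
  proof (rule ccontr)
    assume "yc \<noteq> 0"
    hence "\<not> (e = e \<and> yc = - yc)" by auto
    hence "d \<noteq> None" unfolding d_def ce gadd_eq by (auto simp: Let_def)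
    thus False using dN by simp
  qed
  have aN: "a \<noteq> None"
  proof
    assume "a = None"
    hence "c = None" unfolding c_def by simp
    thus False using cN by simp
  qed
  then obtain xa ya where ae: "a = Some (xa,ya)" by auto
  have "ya \<noteq> 0"
  proof
    assume "ya = 0"
    hence "c = None" unfolding c_def ae by (simp add: gadd_opp)
    thus False using cN by simp
  qed
  moreover have "Some (xa,ya) \<in> gpts (AA m n) (BB m n) 0" using aT ae tors_iff by blast
  moreover have "gadd (AA m n) (BB m n) (Some (xa,ya)) (Some (xa,ya)) = Some (e, 0)"
    using ce \<open>yc = 0\<close> unfolding c_def ae by simp
  ultimately show ?thesis by blast
qed

lemma get_three:
  assumes iso: "\<phi> \<in> iso (E_torsion m n) (integer_mod_group 2 \<times>\<times> integer_mod_group 6)"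
  and ns: "\<forall>x. x^3 + AA m n*x^2 + BB m n*x + 0 = 0 \<longrightarrow> 3*x^2 + 2*AA m n*x + BB m n \<noteq> 0"
  shows "\<exists>x y. y \<noteq> 0 \<and> Some (x,y) \<in> gpts (AA m n) (BB m n) 0 \<and>
           gadd (AA m n) (BB m n) (Some (x,y)) (Some (x,y)) = Some (x, -y)"
proof -
  have N: "(6::nat) > 0" by simp
  note F = iso_facts[OF iso N]
  have z: "\<phi> None = (0,0)" by (rule phi_None[OF iso N])
  have "(0,2) \<in> \<phi> ` torsion_points m n" unfolding F(2) by simp
  then obtain b where bT: "b \<in> torsion_points m n" and pb: "\<phi> b = (0,2)" by auto
  define c where "c = gadd (AA m n) (BB m n) b b"
  have cT: "c \<in> torsion_points m n" unfolding c_def by (rule tors_double[OF ns bT])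
  have pc: "\<phi> c = (0, 4)" unfolding c_def using F(3)[OF bT bT] pb by simp
  have nT: "gneg b \<in> torsion_points m n" by (rule tors_neg[OF bT])
  obtain u v where uv: "\<phi> (gneg b) = (u,v)" by (cases "\<phi> (gneg b)")
  have "\<phi> (gneg b) \<in> \<phi> ` torsion_points m n" using nT by (rule imageI)
  hence "(u,v) \<in> {0..<2} \<times> {0..<int 6}" unfolding F(2) uv .
  hence r: "0 \<le> u" "u < 2" "0 \<le> v" "v < 6" by auto
  have "(0,0) = \<phi> (gadd (AA m n) (BB m n) b (gneg b))" using z gadd_self_neg by simp
  also have "... = ((0 + u) mod 2, (2 + v) mod 6)" using F(3)[OF bT nT] pb uv by simp
  finally have e: "(0 + u) mod 2 = 0" "(2 + v) mod 6 = 0" by simp_all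
  have "u = 0" using e(1) r(1,2) by presburger
  moreover have "v = 4" using e(2) r(3,4) by presburger
  ultimately have "\<phi> (gneg b) = \<phi> c" using uv pc by simp
  hence cb: "c = gneg b" by (rule inj_onD[OF F(1) _ nT cT, symmetric])
  have "b \<noteq> None"
  proof
    assume "b = None"
    hence "\<phi> b = (0,0)" using z by simp
    thus False using pb by simp
  qed
  then obtain x y where be: "b = Some (x,y)" by auto
  have "y \<noteq> 0"
  proof
    assume "y = 0"
    hence "c = None" unfolding c_def be by (simp add: gadd_opp)
    thus False using cb be by simp
  qed
  moreover have "Some (x,y) \<in> gpts (AA m n) (BB m n) 0" using bT be tors_iff by blast
  moreover have "gadd (AA m n) (BB m n) (Some (x,y)) (Some (x,y)) = Some (x, -y)"
    using cb unfolding c_def be by simp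
  ultimately show ?thesis by blast
qed

lemma ratsq_int:
  fixes z :: int and r :: rat
  assumes "of_int z = r^2"
  shows "\<exists>s. z = s^2"
proof -
  obtain a b where qr: "quotient_of r = (a,b)" by (cases "quotient_of r")
  have b: "b > 0" using quotient_of_denom_pos[OF qr] .
  have cop: "coprime a b" using quotient_of_coprime[OF qr] .
  have r: "r = of_int a / of_int b" using quotient_of_div[OF qr] .
  have "of_int z * (of_int b)^2 = (of_int a :: rat)^2" using assms r b by (simp add: power_divide field_simps)
  hence "of_int (z * b^2) = (of_int (a^2) :: rat)" by simp
  hence eq: "z * b^2 = a^2" by (simp only: of_int_eq_iff)
  have "b^2 dvd a^2" using eq by (metis dvd_triv_right)
  hence "b = 1" using cop b by auto
  thus ?thesis using eq by auto
qed

lemma NT: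
  fixes l K z s :: int
  assumes l: "Factorial_Ring.prime l" and lK: "l dvd K" and nl: "\<not> l^2 dvd K" and e: "K*z = s^2"
  shows "l dvd z"
proof -
  have "l dvd s^2" using lK e by (metis dvd_mult2)
  hence "l dvd s" using l prime_dvd_power by blast
  then obtain s' where s': "s = l*s'" by (auto simp: dvd_def)
  obtain K' where K': "K = l*K'" using lK by (auto simp: dvd_def)
  have "l*(K'*z) = l*(l*s'^2)" using e unfolding s' K' by (simp add: power2_eq_square algebra_simps)
  hence "K'*z = l*s'^2" using l by (simp add: prime_gt_0_int)
  hence "l dvd K'*z" by simp
  moreover have "\<not> l dvd K'"
  proof
    assume "l dvd K'"
    hence "l^2 dvd K" unfolding K' by (simp add: power2_eq_square)
    thus False using nl by simp
  qed
  ultimately show ?thesis using l prime_dvd_mult_iff by blast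
qed

lemma sqf_prime: "squarefree (k::nat) \<Longrightarrow> Factorial_Ring.prime l \<Longrightarrow> \<not> l^2 dvd k"
  unfolding squarefree_def by auto

lemma k_one: "(k::nat) > 0 \<Longrightarrow> (\<And>l. Factorial_Ring.prime l \<Longrightarrow> \<not> l dvd k) \<Longrightarrow> k = 1"
  using prime_factor_nat by blast

lemma k_13:
  fixes k :: nat
  assumes sq: "squarefree k" and k: "k > 0" and H: "\<And>l. Factorial_Ring.prime l \<Longrightarrow> l dvd k \<Longrightarrow> l = 3"
  shows "k = 1 \<or> k = 3"
proof (cases "3 dvd k")
  case False
  have "k = 1" using k_one[OF k] H False by blast
  thus ?thesis by simp
next
  case True
  then obtain k' where k': "k = 3*k'" by (auto simp: dvd_def)
  have k'0: "k' > 0" using k k' by simp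
  have "k' = 1"
  proof (rule k_one[OF k'0])
    fix l :: nat assume lp: "Factorial_Ring.prime l"
    show "\<not> l dvd k'"
    proof
      assume "l dvd k'"
      hence "l dvd k" unfolding k' by simp
      hence "l = 3" using H lp by blast
      hence "3^2 dvd k" using \<open>l dvd k'\<close> unfolding k' by (simp add: power2_eq_square)
      moreover have "Factorial_Ring.prime (3::nat)" by simp
      ultimately show False using sqf_prime[OF sq] by blast
    qed
  qed
  thus ?thesis using k' by simp
qed

lemma ns_lemma:
  fixes m n :: int
  assumes m: "m \<noteq> 0" and n: "n \<noteq> 0" and mn: "m \<noteq> n"
  shows "\<forall>x. x^3 + AA m n*x^2 + BB m n*x + 0 = 0 \<longrightarrow> 3*x^2 + 2*AA m n*x + BB m n \<noteq> 0"
proof (intro allI impI)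
  fix x :: rat
  define M where "M = (of_int m :: rat)"
  define N where "N = (of_int n :: rat)"
  have M0: "M \<noteq> 0" and N0: "N \<noteq> 0" and MN: "M \<noteq> N" using m n mn by (simp_all add: M_def N_def)
  have A: "AA m n = M + N" and B: "BB m n = M*N" by (simp_all add: M_def N_def)
  assume "x^3 + AA m n*x^2 + BB m n*x + 0 = 0"
  hence "x*(x+M)*(x+N) = 0" unfolding A B by (simp add: algebra_simps power2_eq_square power3_eq_cube)
  hence "x = 0 \<or> x = -M \<or> x = -N" by (auto simp: add_eq_0_iff)
  thus "3*x^2 + 2*AA m n*x + BB m n \<noteq> 0"
  proof (elim disjE)
    assume "x = 0" thus ?thesis using M0 N0 unfolding A B by simp
  next
    assume "x = -M"
    hence "3*x^2 + 2*AA m n*x + BB m n = M*(M - N)" unfolding A B by (simp add: algebra_simps power2_eq_square)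
    thus ?thesis using M0 MN by simp
  next
    assume "x = -N"
    hence "3*x^2 + 2*AA m n*x + BB m n = N*(N - M)" unfolding A B by (simp add: algebra_simps power2_eq_square)
    thus ?thesis using N0 MN by simp
  qed
qed

lemma desc2:
  fixes m n :: int and x y Xd Yd :: rat
  assumes y: "y \<noteq> 0" and cu: "y^2 = x^3 + AA m n*x^2 + BB m n*x"
  and D: "gadd (AA m n) (BB m n) (Some (x,y)) (Some (x,y)) = Some (Xd,Yd)"
  shows "(\<exists>r. Xd = r^2) \<and> (\<exists>r. Xd + of_int m = r^2) \<and> (\<exists>r. Xd + of_int n = r^2)"
proof -
  define M where "M = (of_int m :: rat)"
  define N where "N = (of_int n :: rat)"
  have A: "AA m n = M + N" and B: "BB m n = M*N" by (simp_all add: M_def N_def)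
  have D': "gadd (M + N) (M*N) (Some (x,y)) (Some (x,y)) = Some (Xd,Yd)" using D unfolding A B .
  have cu': "y^2 = x^3 + (M+N)*x^2 + (M*N)*x" using cu unfolding A B .
  have c1: "y^2 = (x-0)*(x-(-M))*(x-(-N))" using cu' by (simp add: algebra_simps power2_eq_square power3_eq_cube)
  have c2: "y^2 = (x-(-M))*(x-0)*(x-(-N))" using cu' by (simp add: algebra_simps power2_eq_square power3_eq_cube)
  have c3: "y^2 = (x-(-N))*(x-0)*(x-(-M))" using cu' by (simp add: algebra_simps power2_eq_square power3_eq_cube)
  have p1: "-(0 + -M + -N) = M + N" "0*(-M) + 0*(-N) + (-M)*(-N) = M*N" by simp_all
  have p2: "-((-M) + 0 + -N) = M + N" "(-M)*0 + (-M)*(-N) + 0*(-N) = M*N" by simp_all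
  have p3: "-((-N) + 0 + -M) = M + N" "(-N)*0 + (-N)*(-M) + 0*(-M) = M*N" by (simp_all add: mult.commute)
  have r1: "Xd - 0 = (((x-0)^2 - (0-(-M))*(0-(-N)))/(2*y))^2"
    by (rule desc[OF y c1]) (unfold p1, rule D')
  have r2: "Xd - (-M) = (((x-(-M))^2 - ((-M)-0)*((-M)-(-N)))/(2*y))^2"
    by (rule desc[OF y c2]) (unfold p2, rule D')
  have r3: "Xd - (-N) = (((x-(-N))^2 - ((-N)-0)*((-N)-(-M)))/(2*y))^2"
    by (rule desc[OF y c3]) (unfold p3, rule D')
  show ?thesis using r1 r2 r3 unfolding M_def N_def by auto
qed

lemma prime_facts:
  fixes l k :: nat
  assumes sq: "squarefree k" and l: "Factorial_Ring.prime l" and lk: "l dvd k"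
  shows "Factorial_Ring.prime (int l)" "int l dvd int k" "\<not> (int l)^2 dvd int k"
proof -
  show "Factorial_Ring.prime (int l)" using l by simp
  show "int l dvd int k" using lk by simp
  have "\<not> l^2 dvd k" by (rule sqf_prime[OF sq l])
  moreover have "(int l)^2 = int (l^2)" by simp
  ultimately show "\<not> (int l)^2 dvd int k" by (metis int_dvd_int_iff)
qed

lemma part1_k:
  fixes p q k :: nat and m n :: int and xa ya e :: rat
  assumes p: "p > 0" and q: "q > 0" and cop: "coprime p q" and sq: "squarefree k"
  and md: "m = - int (p * k)" and nd: "n = int (q * k)"
  and y0: "ya \<noteq> 0" and on: "Some (xa,ya) \<in> gpts (AA m n) (BB m n) 0"
  and D: "gadd (AA m n) (BB m n) (Some (xa,ya)) (Some (xa,ya)) = Some (e,0)"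
  shows "k = 1"
proof -
  have k0: "k > 0" using sq by (cases k) auto
  have cu: "ya^2 = xa^3 + AA m n*xa^2 + BB m n*xa" using on by (simp add: gpts_Some)
  obtain r0 r1 r2 where s0: "e = r0^2" and s1: "e + of_int m = r1^2" and s2: "e + of_int n = r2^2"
    using desc2[OF y0 cu D] by blast
  have eon: "Some (e,0) \<in> gpts (AA m n) (BB m n) 0" using gclosed[OF on on] D by simp
  hence "0 = e^3 + AA m n * e^2 + BB m n * e" by (simp add: gpts_Some)
  hence "e*(e + of_int m)*(e + of_int n) = 0" by (simp add: algebra_simps power2_eq_square power3_eq_cube)
  hence cs: "e = 0 \<or> e + of_int m = 0 \<or> e + of_int n = 0" by auto
  have pk: "of_int m = -(of_nat p * of_nat k :: rat)" using md by simp
  have qk: "of_int n = (of_nat q * of_nat k :: rat)" using nd by simp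
  have ppos: "(of_nat p * of_nat k :: rat) > 0" using p k0 by simp
  have qpos: "(of_nat q * of_nat k :: rat) > 0" using q k0 by simp
  have e1: "e = of_nat p * of_nat k"
  proof -
    { assume "e = 0"
      hence "r1^2 = -(of_nat p * of_nat k :: rat)" using s1 pk by simp
      moreover have "r1^2 \<ge> 0" by simp
      ultimately have False using ppos by linarith }
    moreover
    { assume "e + of_int n = 0"
      hence "r0^2 = -(of_nat q * of_nat k :: rat)" using s0 qk by simp
      moreover have "r0^2 \<ge> 0" by simp
      ultimately have False using qpos by linarith }
    ultimately have "e + of_int m = 0" using cs by blast
    thus ?thesis using pk by simp
  qed
  have "of_int (int (p*k)) = r0^2" using s0 e1 by simp
  then obtain S where S: "int (p*k) = S^2" using ratsq_int by blast
  have "of_int (int ((p+q)*k)) = r2^2" using s2 e1 qk by (simp add: algebra_simps)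
  then obtain T where T: "int ((p+q)*k) = T^2" using ratsq_int by blast
  show "k = 1"
  proof (rule k_one[OF k0])
    fix l :: nat assume l: "Factorial_Ring.prime l"
    show "\<not> l dvd k"
    proof
      assume lk: "l dvd k"
      note F = prime_facts[OF sq l lk]
      have "int k * int p = S^2" using S by (simp add: mult.commute)
      hence "int l dvd int p" by (rule NT[OF F])
      hence lp: "l dvd p" by simp
      have "int k * (int p + int q) = T^2" using T by (simp add: algebra_simps)
      hence "int l dvd int p + int q" by (rule NT[OF F])
      hence "l dvd p + q" by (metis of_nat_add int_dvd_int_iff)
      hence lq: "l dvd q" using lp by (simp add: dvd_add_right_iff)
      have "is_unit l" using cop lp lq by (rule coprime_common_divisor)
      thus False using l by simp
    qed
  qed
qed

lemma part2_k:
  fixes p q k :: nat and m n :: int and x y :: rat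
  assumes p: "p > 0" and q: "q > 0" and cop: "coprime p q" and sq: "squarefree k"
  and md: "m = - int (p * k)" and nd: "n = int (q * k)"
  and y0: "y \<noteq> 0" and on: "Some (x,y) \<in> gpts (AA m n) (BB m n) 0"
  and D: "gadd (AA m n) (BB m n) (Some (x,y)) (Some (x,y)) = Some (x,-y)"
  shows "k = 1 \<or> k = 3"
proof -
  have k0: "k > 0" using sq by (cases k) auto
  have cu: "y^2 = x^3 + AA m n*x^2 + BB m n*x" using on by (simp add: gpts_Some)
  have Q: "3*x^4 + 4*AA m n*x^3 + 6*BB m n*x^2 - (BB m n)^2 = 0" by (rule quartic[OF y0 cu D])
  have dd: "gadd (AA m n) (BB m n) (Some (x,-y)) (Some (x,-y)) = Some (x, y)"
    using gadd_gneg[of "AA m n" "BB m n" "Some (x,y)" "Some (x,y)"] D by simp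
  have my0: "-y \<noteq> 0" using y0 by simp
  have cu2: "(-y)^2 = x^3 + AA m n*x^2 + BB m n*x" using cu by simp
  obtain r0 r1 r2 where s0: "x = r0^2" and s1: "x + of_int m = r1^2" and s2: "x + of_int n = r2^2"
    using desc2[OF my0 cu2 dd] by blast
  define P where "P = (of_nat p :: rat)"
  define Qq where "Qq = (of_nat q :: rat)"
  define K where "K = (of_nat k :: rat)"
  have K0: "K \<noteq> 0" using k0 by (simp add: K_def)
  have mM: "of_int m = -(P*K)" using md by (simp add: P_def K_def)
  have nN: "of_int n = Qq*K" using nd by (simp add: Qq_def K_def)
  have AAe: "AA m n = (Qq - P)*K" using mM nN by (simp add: algebra_simps)
  have BBe: "BB m n = -(P*Qq*K^2)" using mM nN by (simp add: algebra_simps power2_eq_square)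
  define u where "u = x / K"
  have xu: "x = K*u" using K0 by (simp add: u_def)
  obtain s t where qt: "quotient_of u = (s,t)" by (cases "quotient_of u")
  have t0: "t > 0" using quotient_of_denom_pos[OF qt] .
  have cst: "coprime s t" using quotient_of_coprime[OF qt] .
  have us: "u = of_int s / of_int t" using quotient_of_div[OF qt] .
  define S where "S = (of_int s :: rat)"
  define T where "T = (of_int t :: rat)"
  have T0: "T \<noteq> 0" using t0 by (simp add: T_def)
  have uST: "u = S/T" using us by (simp add: S_def T_def)
  have Qu: "K^4 * (3*u^4 + 4*(Qq-P)*u^3 - 6*P*Qq*u^2 - P^2*Qq^2) = 0"
  proof -
    have "3*x^4 + 4*AA m n*x^3 + 6*BB m n*x^2 - (BB m n)^2 = K^4 * (3*u^4 + 4*(Qq-P)*u^3 - 6*P*Qq*u^2 - P^2*Qq^2)"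
      unfolding xu AAe BBe by (simp add: algebra_simps power2_eq_square power3_eq_cube power4_eq_xxxx)
    thus ?thesis using Q by simp
  qed
  hence Qu': "3*u^4 + 4*(Qq-P)*u^3 - 6*P*Qq*u^2 - P^2*Qq^2 = 0" using K0 by simp
  have "3*S^4 + 4*(Qq-P)*S^3*T - 6*P*Qq*S^2*T^2 - P^2*Qq^2*T^4 = T^4 * (3*u^4 + 4*(Qq-P)*u^3 - 6*P*Qq*u^2 - P^2*Qq^2)"
    unfolding uST using T0 by (simp add: field_simps power2_eq_square power3_eq_cube power4_eq_xxxx)
  hence "3*S^4 + 4*(Qq-P)*S^3*T - 6*P*Qq*S^2*T^2 - P^2*Qq^2*T^4 = 0" using Qu' by simp
  hence "of_int (3*s^4 + 4*(int q - int p)*s^3*t - 6*int p*int q*s^2*t^2 - (int p)^2*(int q)^2*t^4) = (0::rat)"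
    by (simp add: S_def T_def P_def Qq_def)
  hence Zq: "3*s^4 + 4*(int q - int p)*s^3*t - 6*int p*int q*s^2*t^2 - (int p)^2*(int q)^2*t^4 = 0"
    by (simp only: of_int_eq_0_iff)
  have "3*s^4 = t * ((int p)^2*(int q)^2*t^3 + 6*int p*int q*s^2*t - 4*(int q - int p)*s^3)"
    using Zq by (simp add: algebra_simps power2_eq_square power3_eq_cube power4_eq_xxxx)
  hence "t dvd 3*s^4" by (metis dvd_triv_left)
  moreover have "coprime t (s^4)" using cst by (simp add: coprime_commute)
  ultimately have t3: "t dvd 3" by (simp add: coprime_dvd_mult_left_iff)
  have sq0: "of_int (int k * (s*t)) = (r0*T)^2"
  proof -
    have "of_int (int k * (s*t)) = K*S*T" by (simp add: K_def S_def T_def)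
    also have "... = x*T^2" unfolding xu uST using T0 by (simp add: field_simps power2_eq_square)
    also have "... = (r0*T)^2" using s0 by (simp add: power_mult_distrib)
    finally show ?thesis .
  qed
  have sq1: "of_int (int k * ((s - int p*t)*t)) = (r1*T)^2"
  proof -
    have "of_int (int k * ((s - int p*t)*t)) = K*(S - P*T)*T" by (simp add: K_def S_def T_def P_def)
    also have "... = (x + of_int m)*T^2" unfolding mM xu uST using T0 by (simp add: field_simps power2_eq_square)
    also have "... = (r1*T)^2" using s1 by (simp add: power_mult_distrib)
    finally show ?thesis .
  qed
  have sq2: "of_int (int k * ((s + int q*t)*t)) = (r2*T)^2"
  proof -
    have "of_int (int k * ((s + int q*t)*t)) = K*(S + Qq*T)*T" by (simp add: K_def S_def T_def Qq_def)
    also have "... = (x + of_int n)*T^2" unfolding nN xu uST using T0 by (simp add: field_simps power2_eq_square)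
    also have "... = (r2*T)^2" using s2 by (simp add: power_mult_distrib)
    finally show ?thesis .
  qed
  obtain z0 where z0: "int k * (s*t) = z0^2" using ratsq_int[OF sq0] by blast
  obtain z1 where z1: "int k * ((s - int p*t)*t) = z1^2" using ratsq_int[OF sq1] by blast
  obtain z2 where z2: "int k * ((s + int q*t)*t) = z2^2" using ratsq_int[OF sq2] by blast
  show ?thesis
  proof (rule k_13[OF sq k0])
    fix l :: nat assume l: "Factorial_Ring.prime l" and lk: "l dvd k"
    show "l = 3"
    proof (rule ccontr)
      assume l3: "l \<noteq> 3"
      note F = prime_facts[OF sq l lk]
      have nlt: "\<not> int l dvd t"
      proof
        assume "int l dvd t"
        hence "int l dvd 3" using t3 by (rule dvd_trans)
        hence "int l dvd int 3" by simp
        hence "l dvd 3" by (simp only: int_dvd_int_iff)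
        moreover have "Factorial_Ring.prime (3::nat)" by simp
        ultimately have "l = 3" using l primes_dvd_imp_eq by blast
        thus False using l3 by simp
      qed
      have pm: "\<And>a. int l dvd a * t \<Longrightarrow> int l dvd a"
      proof -
        fix a assume "int l dvd a * t"
        hence "int l dvd a \<or> int l dvd t" by (simp add: prime_dvd_mult_iff[OF F(1)])
        thus "int l dvd a" using nlt by blast
      qed
      have "int l dvd s*t" by (rule NT[OF F z0])
      hence ls: "int l dvd s" by (rule pm)
      have "int l dvd (s - int p*t)*t" by (rule NT[OF F z1])
      hence l1: "int l dvd s - int p*t" by (rule pm)
      have "int p * t = s - (s - int p*t)" by simp
      hence "int l dvd int p*t" using dvd_diff[OF ls l1] by simp
      hence "int l dvd int p" by (rule pm)
      hence lp: "l dvd p" by (simp only: int_dvd_int_iff)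
      have "int l dvd (s + int q*t)*t" by (rule NT[OF F z2])
      hence l2: "int l dvd s + int q*t" by (rule pm)
      have "int q * t = (s + int q*t) - s" by simp
      hence "int l dvd int q*t" using dvd_diff[OF l2 ls] by simp
      hence "int l dvd int q" by (rule pm)
      hence lq: "l dvd q" by (simp only: int_dvd_int_iff)
      have "is_unit l" using cop lp lq by (rule coprime_common_divisor)
      thus False using l by simp
    qed
  qed
qed

lemma case_half:
  fixes p q k :: nat and m n :: int and N :: nat and g :: int
  assumes p: "p > 0" and q: "q > 0" and cop: "coprime p q" and sq: "squarefree k"
  and md: "m = - int (p * k)" and nd: "n = int (q * k)"
  and iso: "E_torsion m n \<cong> integer_mod_group 2 \<times>\<times> integer_mod_group N" and N: "N > 0"
  and g: "0 \<le> g" "g < int N" and g1: "(g+g) mod int N \<noteq> 0" and g2: "((g+g) mod int N + (g+g) mod int N) mod int N = 0"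
  shows "k = 1"
proof -
  have k0: "k > 0" using sq by (cases k) auto
  have "int (p*k) > 0" "int (q*k) > 0" using p q k0 by simp_all
  hence "m < 0" "n > 0" using md nd by simp_all
  hence "m \<noteq> 0" "n \<noteq> 0" "m \<noteq> n" by auto
  note ns = ns_lemma[OF this]
  obtain \<phi> where ph: "\<phi> \<in> iso (E_torsion m n) (integer_mod_group 2 \<times>\<times> integer_mod_group N)"
    using iso unfolding is_iso_def by blast
  obtain xa ya e where "ya \<noteq> 0" "Some (xa,ya) \<in> gpts (AA m n) (BB m n) 0"
    "gadd (AA m n) (BB m n) (Some (xa,ya)) (Some (xa,ya)) = Some (e, 0)"
    using get_half[OF ph N ns g g1 g2] by blast
  thus ?thesis using part1_k[OF p q cop sq md nd] by blast
qed

theorem theorem3p3: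
  fixes p q k :: nat and m n :: int
  assumes "p > 0" and "q > 0" and "coprime p q" and "squarefree k"
    and "m = - int (p * k)" and "n = int (q * k)"
  shows "(E_torsion m n \<cong> integer_mod_group 2 \<times>\<times> integer_mod_group 4
            \<or> E_torsion m n \<cong> integer_mod_group 2 \<times>\<times> integer_mod_group 8 \<longrightarrow> k = 1)
       \<and> (E_torsion m n \<cong> integer_mod_group 2 \<times>\<times> integer_mod_group 6 \<longrightarrow> k = 1 \<or> k = 3)"
proof (intro conjI impI)
  assume "E_torsion m n \<cong> integer_mod_group 2 \<times>\<times> integer_mod_group 4
            \<or> E_torsion m n \<cong> integer_mod_group 2 \<times>\<times> integer_mod_group 8"
  thus "k = 1"
  proof
    assume iso: "E_torsion m n \<cong> integer_mod_group 2 \<times>\<times> integer_mod_group 4"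
    show "k = 1" by (rule case_half[OF assms iso, of 1]) simp_all
  next
    assume iso: "E_torsion m n \<cong> integer_mod_group 2 \<times>\<times> integer_mod_group 8"
    show "k = 1" by (rule case_half[OF assms iso, of 2]) simp_all
  qed
next
  assume iso: "E_torsion m n \<cong> integer_mod_group 2 \<times>\<times> integer_mod_group 6"
  have k0: "k > 0" using assms(4) by (cases k) auto
  have "int (p*k) > 0" "int (q*k) > 0" using assms(1,2) k0 by simp_all
  hence "m < 0" "n > 0" using assms(5,6) by simp_all
  hence "m \<noteq> 0" "n \<noteq> 0" "m \<noteq> n" by auto
  note ns = ns_lemma[OF this]
  obtain \<phi> where ph: "\<phi> \<in> iso (E_torsion m n) (integer_mod_group 2 \<times>\<times> integer_mod_group 6)"
    using iso unfolding is_iso_def by blast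
  obtain x y where "y \<noteq> 0" "Some (x,y) \<in> gpts (AA m n) (BB m n) 0"
    "gadd (AA m n) (BB m n) (Some (x,y)) (Some (x,y)) = Some (x, -y)"
    using get_three[OF ph ns] by blast
  thus "k = 1 \<or> k = 3" using part2_k[OF assms] by blast
qed

end
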